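(* Let $G$ be a connected graph in $\mathcal{C}$ and $C$ an induced $C_5$ in $G$ with vertices $0,\dots,4$ in cyclic order. For any two distinct indices $i,j$, no vertex of $X_i$ has two neighbours in $X_j$.
   Context: $\mathcal{C}=\mathrm{Free}(\text{claw}, 4K_1, \text{5-wheel}, C_5\text{-twin}, P_5\text{-twin}, K_5-e)$, where $\mathrm{Free}(L)$ is the class of graphs with no induced subgraph isomorphic to a member of $L$; the claw is $K_{1,3}$; $4K_1$ is the edgeless graph on 4 vertices; the 5-wheel is $C_5$ plus a vertex adjacent to all five cycle vertices; the $C_5$-twin is $C_5$ plus a new vertex adjacent to one cycle vertex $v$ and both cycle-neighbours of $v$; the $P_5$-twin is a path $p_1p_2p_3p_4p_5$ plus a new vertex adjacent to exactly $p_2,p_3,p_4$; $K_5-e$ is $K_5$ minus one edge. Given an induced cycle $C$ of length 5 with vertices $0,\dots,4$ in cyclic order (indices taken mod 5): $R$ is the set of vertices outside $C$ with no neighbour in $C$; $X_j$ is the set of vertices outside $C$ whose neighbourhood in $C$ is exactly $\{j,j+1\}$; $Y_j$ is the set of vertices outside $C$ whose neighbourhood in $C$ is exactly $\{j,j+1,j+2,j+3\}$; $X=\bigcup_j X_j$, $Y=\bigcup_j Y_j$. *)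

theory Defs
  imports Main
begin

definition simple_graph :: "'a set \<Rightarrow> ('a \<Rightarrow> 'a \<Rightarrow> bool) \<Rightarrow> bool" where
  "simple_graph V E \<longleftrightarrow> finite V \<and> (\<forall>x y. E x y \<longrightarrow> x \<in> V \<and> y \<in> V)
     \<and> (\<forall>x y. E x y \<longrightarrow> E y x) \<and> (\<forall>x. \<not> E x x)"

definition connected_graph :: "'a set \<Rightarrow> ('a \<Rightarrow> 'a \<Rightarrow> bool) \<Rightarrow> bool" where
  "connected_graph V E \<longleftrightarrow> (\<forall>x\<in>V. \<forall>y\<in>V. (x, y) \<in> {(a, b). E a b}\<^sup>*)"

definition pat_adj :: "(nat \<times> nat) list \<Rightarrow> nat \<Rightarrow> nat \<Rightarrow> bool" where
  "pat_adj es a b \<longleftrightarrow> (a, b) \<in> set es \<or> (b, a) \<in> set es"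

definition has_induced :: "'a set \<Rightarrow> ('a \<Rightarrow> 'a \<Rightarrow> bool) \<Rightarrow> nat \<Rightarrow> (nat \<times> nat) list \<Rightarrow> bool" where
  "has_induced V E n es \<longleftrightarrow> (\<exists>f. inj_on f {..<n} \<and> f ` {..<n} \<subseteq> V \<and>
      (\<forall>a<n. \<forall>b<n. E (f a) (f b) \<longleftrightarrow> pat_adj es a b))"

definition claw_edges :: "(nat \<times> nat) list" where
  "claw_edges = [(0,1),(0,2),(0,3)]"

definition fourK1_edges :: "(nat \<times> nat) list" where
  "fourK1_edges = []"                  (* on 4 vertices *)

definition C5_edges :: "(nat \<times> nat) list" where
  "C5_edges = [(0,1),(1,2),(2,3),(3,4),(4,0)]"

definition wheel5_edges :: "(nat \<times> nat) list" where
  "wheel5_edges = C5_edges @ [(5,0),(5,1),(5,2),(5,3),(5,4)]"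

definition C5_twin_edges :: "(nat \<times> nat) list" where
  "C5_twin_edges = C5_edges @ [(5,0),(5,1),(5,4)]"

definition P5_twin_edges :: "(nat \<times> nat) list" where
  "P5_twin_edges = [(0,1),(1,2),(2,3),(3,4),(5,1),(5,2),(5,3)]"

definition K5_minus_e_edges :: "(nat \<times> nat) list" where
  "K5_minus_e_edges = [(0,2),(0,3),(0,4),(1,2),(1,3),(1,4),(2,3),(2,4),(3,4)]"

definition in_class_C :: "'a set \<Rightarrow> ('a \<Rightarrow> 'a \<Rightarrow> bool) \<Rightarrow> bool" where
  "in_class_C V E \<longleftrightarrow> simple_graph V E \<and>
     \<not> has_induced V E 4 claw_edges \<and>
     \<not> has_induced V E 4 fourK1_edges \<and>
     \<not> has_induced V E 6 wheel5_edges \<and>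
     \<not> has_induced V E 6 C5_twin_edges \<and>
     \<not> has_induced V E 6 P5_twin_edges \<and>
     \<not> has_induced V E 5 K5_minus_e_edges"

definition induced_C5 :: "'a set \<Rightarrow> ('a \<Rightarrow> 'a \<Rightarrow> bool) \<Rightarrow> (nat \<Rightarrow> 'a) \<Rightarrow> bool" where
  "induced_C5 V E c \<longleftrightarrow> inj_on c {..<5} \<and> c ` {..<5} \<subseteq> V \<and>
     (\<forall>i<5. \<forall>j<5. E (c i) (c j) \<longleftrightarrow> (j = (i + 1) mod 5 \<or> i = (j + 1) mod 5))"

definition Xset :: "'a set \<Rightarrow> ('a \<Rightarrow> 'a \<Rightarrow> bool) \<Rightarrow> (nat \<Rightarrow> 'a) \<Rightarrow> nat \<Rightarrow> 'a set" where
  "Xset V E c j = {v \<in> V - c ` {..<5}. \<forall>k<5. E v (c k) \<longleftrightarrow> (k = j mod 5 \<or> k = (j + 1) mod 5)}"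

end

theory Submission imports Defs begin
lemma all4: "(\<forall>a<(4::nat). P a) = (P 0 \<and> P 1 \<and> P 2 \<and> P 3)"
  by (auto simp: less_Suc_eq numeral_eq_Suc)
lemma lt4: "{..<(4::nat)} = {0,1,2,3}" by auto

lemma claw_free:
  assumes "simple_graph V E" "\<not> has_induced V E 4 claw_edges"
    "x \<in> V" "u \<in> V" "y \<in> V" "z \<in> V"
    "E x u" "E x y" "E x z" "u \<noteq> y" "u \<noteq> z" "y \<noteq> z"
    "\<not> E u y" "\<not> E u z"
  shows "E y z"
proof (rule ccontr)
  assume nyz: "\<not> E y z"
  have irr: "\<And>v. \<not> E v v" and sym: "\<And>a b. E a b = E b a"
    using assms(1) unfolding simple_graph_def by blast+
  have ne: "x \<noteq> u" "x \<noteq> y" "x \<noteq> z" using assms(7-9) irr by auto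
  let ?f = "\<lambda>n. [x,u,y,z] ! n"
  have i: "inj_on ?f {..<4}" unfolding lt4 inj_on_def using assms(10-12) ne by auto
  have a: "\<forall>a<4. \<forall>b<4. E (?f a) (?f b) = pat_adj claw_edges a b"
    unfolding all4 using assms(7-14) nyz irr by (simp add: pat_adj_def claw_edges_def sym)
  have "has_induced V E 4 claw_edges"
    unfolding has_induced_def
    by (rule exI[of _ ?f], intro conjI i a) (use assms(3-6) in \<open>auto simp: lt4\<close>)
  with assms(2) show False by simp
qed



lemma lt5: "{..<(5::nat)} = {0,1,2,3,4}" by auto
lemma lt6: "{..<(6::nat)} = {0,1,2,3,4,5}" by auto
lemma all5: "(\<forall>a<(5::nat). P a) = (P 0 \<and> P 1 \<and> P 2 \<and> P 3 \<and> P 4)"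
proof -
  have "(\<forall>a<(5::nat). P a) = (\<forall>a\<in>{..<5}. P a)" by auto
  then show ?thesis unfolding lt5 by simp
qed
lemma all6: "(\<forall>a<(6::nat). P a) = (P 0 \<and> P 1 \<and> P 2 \<and> P 3 \<and> P 4 \<and> P 5)"
proof -
  have "(\<forall>a<(6::nat). P a) = (\<forall>a\<in>{..<6}. P a)" by auto
  then show ?thesis unfolding lt6 by simp
qed

lemma k5e_free:
  assumes "simple_graph V E" "\<not> has_induced V E 5 K5_minus_e_edges"
    "v0 \<in> V" "v1 \<in> V" "v2 \<in> V" "v3 \<in> V" "v4 \<in> V"
    "\<not> E v0 v1" "E v0 v2" "E v0 v3" "E v0 v4" "E v1 v2" "E v1 v3" "E v1 v4"
    "E v2 v3" "E v2 v4" "E v3 v4" "v0 \<noteq> v1"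
  shows False
proof -
  have irr: "\<And>v. \<not> E v v" and sym: "\<And>a b. E a b = E b a"
    using assms(1) unfolding simple_graph_def by blast+
  have ne: "v0 \<noteq> v2" "v0 \<noteq> v3" "v0 \<noteq> v4" "v1 \<noteq> v2" "v1 \<noteq> v3" "v1 \<noteq> v4"
     "v2 \<noteq> v3" "v2 \<noteq> v4" "v3 \<noteq> v4" using assms(9-17) irr by auto
  let ?f = "\<lambda>n. [v0,v1,v2,v3,v4] ! n"
  have i: "inj_on ?f {..<5}" unfolding lt5 inj_on_def using assms(18) ne by (simp add: ne ne[THEN not_sym] assms(18) assms(18)[THEN not_sym])
  have a: "\<forall>a<5. \<forall>b<5. E (?f a) (?f b) = pat_adj K5_minus_e_edges a b"
    unfolding all5 using assms(8-17) irr by (simp add: pat_adj_def K5_minus_e_edges_def sym)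
  have "has_induced V E 5 K5_minus_e_edges"
    unfolding has_induced_def
    by (rule exI[of _ ?f], intro conjI i a) (use assms(3-7) in \<open>auto simp: lt5\<close>)
  with assms(2) show False by simp
qed

lemma c5twin_free:
  assumes "simple_graph V E" "\<not> has_induced V E 6 C5_twin_edges"
    "v0 \<in> V" "v1 \<in> V" "v2 \<in> V" "v3 \<in> V" "v4 \<in> V" "v5 \<in> V"
    "E v0 v1" "E v1 v2" "E v2 v3" "E v3 v4" "E v4 v0"
    "\<not> E v0 v2" "\<not> E v0 v3" "\<not> E v1 v3" "\<not> E v1 v4" "\<not> E v2 v4"
    "E v5 v0" "E v5 v1" "E v5 v4" "\<not> E v5 v2" "\<not> E v5 v3"
    "v0 \<noteq> v2" "v0 \<noteq> v3" "v1 \<noteq> v3" "v1 \<noteq> v4" "v2 \<noteq> v4" "v5 \<noteq> v2" "v5 \<noteq> v3"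
  shows False
proof -
  have irr: "\<And>v. \<not> E v v" and sym: "\<And>a b. E a b = E b a"
    using assms(1) unfolding simple_graph_def by blast+
  have ne: "v0 \<noteq> v1" "v1 \<noteq> v2" "v2 \<noteq> v3" "v3 \<noteq> v4" "v4 \<noteq> v0"
    "v5 \<noteq> v0" "v5 \<noteq> v1" "v5 \<noteq> v4" using assms(9-13,19-21) irr by auto
  let ?f = "\<lambda>n. [v0,v1,v2,v3,v4,v5] ! n"
  have i: "inj_on ?f {..<6}" unfolding lt6 inj_on_def by (simp add: ne ne[THEN not_sym] assms(24-30) assms(24-30)[THEN not_sym])
  have a: "\<forall>a<6. \<forall>b<6. E (?f a) (?f b) = pat_adj C5_twin_edges a b"
    unfolding all6 using assms(9-23) irr
    by (simp add: pat_adj_def C5_twin_edges_def C5_edges_def sym)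
  have "has_induced V E 6 C5_twin_edges"
    unfolding has_induced_def
    by (rule exI[of _ ?f], intro conjI i a) (use assms(3-8) in \<open>auto simp: lt6\<close>)
  with assms(2) show False by simp
qed
theorem claim15:
  fixes V :: "'a set" and E :: "'a \<Rightarrow> 'a \<Rightarrow> bool" and c :: "nat \<Rightarrow> 'a"
  assumes "in_class_C V E" and "connected_graph V E" and "induced_C5 V E c"
    and "i < 5" and "j < 5" and "i \<noteq> j"
    and "x \<in> Xset V E c i"
  shows "\<not> (\<exists>y z. y \<noteq> z \<and> y \<in> Xset V E c j \<and> z \<in> Xset V E c j \<and> E x y \<and> E x z)"
proof
  assume "\<exists>y z. y \<noteq> z \<and> y \<in> Xset V E c j \<and> z \<in> Xset V E c j \<and> E x y \<and> E x z"
  then obtain y z where yz: "y \<noteq> z" "y \<in> Xset V E c j" "z \<in> Xset V E c j" "E x y" "E x z"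
    by blast
  have sg: "simple_graph V E" and clf: "\<not> has_induced V E 4 claw_edges"
    and k5f: "\<not> has_induced V E 5 K5_minus_e_edges"
    and twf: "\<not> has_induced V E 6 C5_twin_edges"
    using assms(1) unfolding in_class_C_def by auto
  have sym: "\<And>a b. E a b \<Longrightarrow> E b a"
    using sg unfolding simple_graph_def by auto
  have cyc: "\<And>a b. a<5 \<Longrightarrow> b<5 \<Longrightarrow> E (c a) (c b) = (b = (a+1) mod 5 \<or> a = (b+1) mod 5)"
    and cinj: "\<And>a b. a<5 \<Longrightarrow> b<5 \<Longrightarrow> c a = c b \<Longrightarrow> a = b"
    and cV: "\<And>a. a<5 \<Longrightarrow> c a \<in> V"
    using assms(3) unfolding induced_C5_def inj_on_def by auto
  have imod: "i mod 5 = i" "j mod 5 = j" using assms(4,5) by auto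
  have hx: "\<And>k. k<5 \<Longrightarrow> E x (c k) = (k = i \<or> k = (i+1) mod 5)"
    and xV: "x \<in> V" and xc: "\<And>k. k<5 \<Longrightarrow> x \<noteq> c k"
    using assms(7) imod unfolding Xset_def by auto
  have hy: "\<And>k. k<5 \<Longrightarrow> E y (c k) = (k = j \<or> k = (j+1) mod 5)"
    and yV: "y \<in> V" and yc: "\<And>k. k<5 \<Longrightarrow> y \<noteq> c k"
    using yz(2) imod unfolding Xset_def by auto
  have hz: "\<And>k. k<5 \<Longrightarrow> E z (c k) = (k = j \<or> k = (j+1) mod 5)"
    and zV: "z \<in> V" and zc: "\<And>k. k<5 \<Longrightarrow> z \<noteq> c k"
    using yz(3) imod unfolding Xset_def by auto
  have hcx: "\<And>k. k<5 \<Longrightarrow> E (c k) x = (k = i \<or> k = (i+1) mod 5)"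
    using hx sym by blast
  have hcy: "\<And>k. k<5 \<Longrightarrow> E (c k) y = (k = j \<or> k = (j+1) mod 5)"
    using hy sym by blast
  have hcz: "\<And>k. k<5 \<Longrightarrow> E (c k) z = (k = j \<or> k = (j+1) mod 5)"
    using hz sym by blast
  have xy: "x \<noteq> y" "x \<noteq> z" using yz(4,5) sg unfolding simple_graph_def by auto
  have ic: "i = 0 \<or> i = 1 \<or> i = 2 \<or> i = 3 \<or> i = 4" using assms(4) by auto
  have jc0: "j = 0 \<or> j = 1 \<or> j = 2 \<or> j = 3 \<or> j = 4" using assms(5) by auto
  obtain k where k: "k < 5" "k = i \<or> k = (i+1) mod 5" "k \<noteq> j" "k \<noteq> (j+1) mod 5"
  proof (cases "i = (j+1) mod 5")
    case True
    show ?thesis by (rule that[of "(i+1) mod 5"]) (use True ic jc0 assms(6) in \<open>elim disjE; simp\<close>)+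
  next
    case False
    show ?thesis by (rule that[of i]) (use False ic jc0 assms(6) in \<open>elim disjE; simp\<close>)+
  qed
  have Eyz: "E y z"
  proof (rule claw_free[OF sg clf xV cV[OF k(1)] yV zV _ yz(4,5) _ _ yz(1)])
    show "E x (c k)" using hx[OF k(1)] k(2) by simp
    show "c k \<noteq> y" using yc[OF k(1)] by simp
    show "c k \<noteq> z" using zc[OF k(1)] by simp
    show "\<not> E (c k) y" using hcy[OF k(1)] k(3,4) by simp
    show "\<not> E (c k) z" using hcz[OF k(1)] k(3,4) by simp
  qed
  have jc: "j = (i+1) mod 5 \<or> j = (i+2) mod 5 \<or> j = (i+3) mod 5 \<or> j = (i+4) mod 5"
    using ic jc0 assms(6) by (elim disjE; simp)
  have cne: "\<And>a b. a<5 \<Longrightarrow> b<5 \<Longrightarrow> a \<noteq> b \<Longrightarrow> c a \<noteq> c b" using cinj by blast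
  have Esym: "E y x" "E z x" "E z y" using sym yz(4,5) Eyz by auto
  note facts = hx hy hz hcx hcy hcz cyc xc yc zc xc[THEN not_sym] yc[THEN not_sym] zc[THEN not_sym]
     Eyz yz(1,4,5) yz(1)[THEN not_sym] xy xy[THEN not_sym] cne Esym
  show False
    using jc
  proof (elim disjE)
    assume jeq: "j = (i+1) mod 5"
    show False
      apply (insert ic)
      apply (elim disjE; rule k5e_free[OF sg k5f xV cV cV yV zV, of "(i+2) mod 5" "(i+1) mod 5"])
      apply (simp_all add: jeq facts)
      done
  next
    assume jeq: "j = (i+4) mod 5"
    show False
      apply (insert ic)
      apply (elim disjE; rule k5e_free[OF sg k5f xV cV cV yV zV, of "(i+4) mod 5" "i"])
      apply (simp_all add: jeq facts)
      done
  next
    assume jeq: "j = (i+2) mod 5"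
    show False
      apply (insert ic)
      apply (elim disjE; rule c5twin_free[OF sg twf yV cV cV cV xV zV, of "(i+3) mod 5" "(i+4) mod 5" i])
      apply (simp_all add: jeq facts)
      done
  next
    assume jeq: "j = (i+3) mod 5"
    show False
      apply (insert ic)
      apply (elim disjE; rule c5twin_free[OF sg twf yV cV cV cV xV zV, of "(i+3) mod 5" "(i+2) mod 5" "(i+1) mod 5"])
      apply (simp_all add: jeq facts)
      done
  qed
qed
end
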